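(* Let $0<q<1$ and let $x,y$ be real numbers with $|x|<1$ and $|y|<1$. Then \[ \sum_{m=0}^\infty\sum_{n=0}^\infty (-1)^{m+n}[x]_q^{m+1}[y]_q^{n+1}\,\zeta[m+2,\{1\}^n] = 1-\frac{\Gamma_q(1+x)\,\Gamma_q(1+y)}{\Gamma_q(1+x+y)}. \]
   Context: Fix $0<q<1$ and for real $x$ put $[x]_q := (1-q^x)/(1-q)$. For positive integers $s_1,\dots,s_N$ with $s_1>1$, $\zeta[s_1,\dots,s_N] := \sum_{k_1>\cdots>k_N>0}\prod_{j=1}^N q^{(s_j-1)k_j}/[k_j]_q^{s_j}$ (sum over positive integers); $\{1\}^n$ denotes $n$ consecutive copies of $1$. For real $a,b$ put $(a+b)_q^\infty := \prod_{k=0}^\infty(a+bq^k)$. The $q$-gamma function is $\Gamma_q(x) := \dfrac{(1-q)_q^\infty\,(1-q)^{1-x}}{(1-q^x)_q^\infty}$, i.e. $\Gamma_q(x)=(1-q)^{1-x}\prod_{k\ge0}\frac{1-q^{k+1}}{1-q^{k+x}}$. *)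

theory Defs
  imports "HOL-Analysis.Analysis"
begin

definition qbr :: "real \<Rightarrow> real \<Rightarrow> real" where
  "qbr q x = (1 - q powr x) / (1 - q)"

definition qzeta :: "real \<Rightarrow> nat list \<Rightarrow> real" where
  "qzeta q s = infsum
     (\<lambda>ks. \<Prod>j<length s. q ^ ((s ! j - 1) * (ks ! j)) / (qbr q (real (ks ! j))) ^ (s ! j))
     {ks. length ks = length s \<and> sorted_wrt (>) ks \<and> (\<forall>k\<in>set ks. k > 0)}"

definition qpoch_inf :: "real \<Rightarrow> real \<Rightarrow> real \<Rightarrow> real" where
  "qpoch_inf q a b = (\<Prod>k. a + b * q ^ k)"

definition qGamma :: "real \<Rightarrow> real \<Rightarrow> real" where
  "qGamma q x = qpoch_inf q 1 (- q) * (1 - q) powr (1 - x) / qpoch_inf q 1 (- (q powr x))"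

end

theory Submission
  imports Defs
begin


definition qinf :: "real \<Rightarrow> real \<Rightarrow> real" where
  "qinf q c = (\<Prod>k. 1 - c * q ^ k)"
definition qfin :: "real \<Rightarrow> real \<Rightarrow> nat \<Rightarrow> real" where
  "qfin q c n = (\<Prod>j<n. 1 - c * q ^ j)"

lemma qinf_convergent:
  fixes q c :: real assumes "0 < q" "q < 1"
  shows "convergent_prod (\<lambda>k. 1 - c * q ^ k)"
proof -
  have "summable (\<lambda>k. norm ((1 - c * q ^ k) - 1))"
    using assms by (simp add: abs_mult power_abs summable_mult summable_geometric)
  then show ?thesis
    by (intro abs_convergent_prod_imp_convergent_prod summable_imp_abs_convergent_prod)
qed

lemma qfin_tendsto:
  fixes q c :: real assumes "0 < q" "q < 1"
  shows "(\<lambda>n. qfin q c n) \<longlonglongrightarrow> qinf q c"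
proof -
  have "(\<lambda>n. \<Prod>i\<le>n. 1 - c * q ^ i) \<longlonglongrightarrow> qinf q c"
    unfolding qinf_def using convergent_prod_LIMSEQ[OF qinf_convergent[OF assms]] .
  then have "(\<lambda>n. qfin q c (Suc n)) \<longlonglongrightarrow> qinf q c"
    by (simp add: qfin_def lessThan_Suc_atMost)
  then show ?thesis by (rule LIMSEQ_imp_Suc)
qed

lemma qinf_nonzero:
  fixes q c :: real assumes "0 < q" "q < 1" "\<And>k. c * q ^ k \<noteq> 1"
  shows "qinf q c \<noteq> 0"
  unfolding qinf_def using assms by (intro prodinf_nonzero qinf_convergent) auto

lemma qinf_split:
  fixes q c :: real assumes "0 < q" "q < 1" "\<And>k. k < n \<Longrightarrow> c * q ^ k \<noteq> 1"
  shows "qinf q c = qfin q c n * qinf q (c * q ^ n)"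
proof -
  have "qinf q c = (\<Prod>i. 1 - c * q ^ (i + n)) * (\<Prod>i<n. 1 - c * q ^ i)"
    unfolding qinf_def using assms by (intro prodinf_split_initial_segment qinf_convergent) auto
  also have "(\<Prod>i. 1 - c * q ^ (i + n)) = qinf q (c * q ^ n)"
    unfolding qinf_def by (simp add: power_add mult_ac)
  finally show ?thesis by (simp add: qfin_def)
qed

lemma qfin_q_pos:
  fixes q :: real assumes "0 < q" "q < 1"
  shows "qfin q q n > 0"
  unfolding qfin_def using assms
  by (intro prod_pos) (auto simp: power_Suc[symmetric] intro!: power_less_one_iff[THEN iffD2] simp del: power_Suc)

lemma qfin_Suc: "qfin q c (Suc n) = qfin q c n * (1 - c * q ^ n)"
  by (simp add: qfin_def)

lemma qbinomial:
  fixes q c z :: real assumes q: "0 < q" "q < 1" and z: "\<bar>z\<bar> < 1"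
  shows "(\<lambda>n. qfin q c n / qfin q q n * z ^ n) sums (qinf q (c * z) / qinf q z)"
proof -
  define A where "A n = qfin q c n / qfin q q n" for n
  define f where "f w = (\<Sum>n. A n * w ^ n)" for w :: real
  have qqnz: "qinf q q \<noteq> 0"
    using q by (intro qinf_nonzero) (auto simp: power_Suc[symmetric] simp del: power_Suc
        intro!: power_less_one_iff[THEN iffD2] less_imp_neq)
  have "A \<longlonglongrightarrow> qinf q c / qinf q q"
    unfolding A_def using q qqnz by (intro tendsto_divide qfin_tendsto)
  then have "Bseq A" by (rule convergent_imp_Bseq[OF convergentI])
  then obtain B where B: "B > 0" "\<And>n. norm (A n) \<le> B" by (auto simp: Bseq_def)
  have summ: "summable (\<lambda>n. A n * w ^ n)" if "\<bar>w\<bar> < 1" for w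
  proof (rule summable_comparison_test)
    show "\<exists>N. \<forall>n\<ge>N. norm (A n * w ^ n) \<le> B * \<bar>w\<bar> ^ n"
      using B by (auto simp: abs_mult power_abs intro!: mult_right_mono)
    show "summable (\<lambda>n. B * \<bar>w\<bar> ^ n)"
      using that by (intro summable_mult summable_geometric) auto
  qed
  have rec: "A (Suc m) * (1 - q ^ Suc m) = A m * (1 - c * q ^ m)" for m
  proof -
    have "q ^ Suc m < 1" using q by (intro power_less_one_iff[THEN iffD2]) auto
    then have "qfin q q m > 0" "1 - q ^ Suc m \<noteq> 0"
      using q qfin_q_pos[OF q, of m] by (auto simp del: power_Suc)
    moreover have "qfin q q (Suc m) = qfin q q m * (1 - q ^ Suc m)"
      by (simp add: qfin_Suc)
    ultimately show ?thesis by (simp add: A_def qfin_Suc field_simps)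
  qed
  have FE: "(1 - w) * f w = (1 - c * w) * f (q * w)" if w: "\<bar>w\<bar> < 1" for w
  proof -
    have qw: "\<bar>q * w\<bar> < 1" using q w by (simp add: abs_mult) (smt (verit) mult_left_le_one_le)
    have s1: "(\<lambda>n. A n * w ^ n) sums f w" unfolding f_def using summ[OF w] by (rule summable_sums)
    have s2: "(\<lambda>n. A n * (q * w) ^ n) sums f (q * w)" unfolding f_def using summ[OF qw] by (rule summable_sums)
    have d: "(\<lambda>n. A n * w ^ n - A n * (q * w) ^ n) sums (f w - f (q * w))"
      using s1 s2 by (rule sums_diff)
    have "(\<lambda>n. w * (A n * w ^ n - c * (A n * (q * w) ^ n))) sums (w * (f w - c * f (q * w)))"
      using s1 s2 by (intro sums_mult sums_diff sums_mult)
    moreover have "w * (A n * w ^ n - c * (A n * (q * w) ^ n)) =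
        A (Suc n) * w ^ Suc n - A (Suc n) * (q * w) ^ Suc n" for n
    proof -
      have "A (Suc n) * w ^ Suc n - A (Suc n) * (q * w) ^ Suc n = A (Suc n) * (1 - q ^ Suc n) * w ^ Suc n"
        by (simp add: power_mult_distrib algebra_simps)
      also have "\<dots> = A n * (1 - c * q ^ n) * w ^ Suc n" using rec[of n] by (simp del: power_Suc)
      finally show ?thesis by (simp add: power_mult_distrib algebra_simps)
    qed
    ultimately have "(\<lambda>n. A (Suc n) * w ^ Suc n - A (Suc n) * (q * w) ^ Suc n) sums (w * (f w - c * f (q * w)))"
      by simp
    then have "(\<lambda>n. A n * w ^ n - A n * (q * w) ^ n) sums (w * (f w - c * f (q * w)) + (A 0 * w ^ 0 - A 0 * (q * w) ^ 0))"
      by (subst sums_Suc_iff[symmetric]) simp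
    then have "(\<lambda>n. A n * w ^ n - A n * (q * w) ^ n) sums (w * (f w - c * f (q * w)))" by simp
    from sums_unique2[OF d this] show ?thesis by (simp add: algebra_simps)
  qed
  have pw: "\<bar>q ^ N * z\<bar> < 1" for N
    using q z by (simp add: abs_mult) (smt (verit) mult_left_le_one_le power_le_one zero_le_power)
  have iter: "qfin q z N * f z = qfin q (c * z) N * f (q ^ N * z)" for N
  proof (induction N)
    case 0 then show ?case by (simp add: qfin_def)
  next
    case (Suc N)
    have "qfin q z (Suc N) * f z = (1 - z * q ^ N) * (qfin q z N * f z)" by (simp add: qfin_Suc)
    also have "\<dots> = qfin q (c * z) N * ((1 - q ^ N * z) * f (q ^ N * z))" using Suc.IH by (simp add: mult_ac)
    also have "\<dots> = qfin q (c * z) N * ((1 - c * (q ^ N * z)) * f (q * (q ^ N * z)))" by (simp add: FE[OF pw])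
    also have "\<dots> = qfin q (c * z) (Suc N) * f (q ^ Suc N * z)" by (simp add: qfin_Suc mult_ac)
    finally show ?case .
  qed
  have cont: "isCont f 0"
    unfolding f_def by (rule isCont_powser[of _ "1/2"]) (use summ[of "1/2"] in auto)
  have "(\<lambda>N. q ^ N * z) \<longlonglongrightarrow> 0"
    using q by (intro tendsto_mult_left_zero LIMSEQ_power_zero) auto
  then have "(\<lambda>N. f (q ^ N * z)) \<longlonglongrightarrow> f 0"
    using cont isCont_tendsto_compose by blast
  moreover have "f 0 = 1" unfolding f_def by (subst powser_zero) (simp add: A_def qfin_def)
  ultimately have "(\<lambda>N. qfin q (c * z) N * f (q ^ N * z)) \<longlonglongrightarrow> qinf q (c * z) * 1"
    by (intro tendsto_mult qfin_tendsto q) auto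
  moreover have "(\<lambda>N. qfin q z N * f z) \<longlonglongrightarrow> qinf q z * f z"
    by (intro tendsto_mult qfin_tendsto q tendsto_const)
  ultimately have "qinf q z * f z = qinf q (c * z)"
    using iter LIMSEQ_unique by fastforce
  moreover have "qinf q z \<noteq> 0"
    using pw by (intro qinf_nonzero q) (metis abs_one less_irrefl mult.commute)
  ultimately have "f z = qinf q (c * z) / qinf q z" by (simp add: field_simps)
  then show ?thesis using summable_sums[OF summ[OF z]] by (simp add: f_def A_def)
qed

lemma qfin_Suc_shift: "qfin q c (Suc n) = (1 - c) * qfin q (c * q) n"
  unfolding qfin_def by (subst prod.lessThan_Suc_shift) (simp add: mult_ac)

lemma qfin_nonneg:
  fixes q c :: real assumes "0 < q" "q < 1" "c \<le> 1"
  shows "qfin q c n \<ge> 0"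
  unfolding qfin_def
proof (intro prod_nonneg)
  fix j assume "j \<in> {..<n}"
  have "c * q ^ j \<le> 1"
  proof (cases "c \<le> 0")
    case True then show ?thesis by (smt (verit) assms(1) mult_nonpos_nonneg zero_le_power)
  next
    case False then show ?thesis
      using assms by (smt (verit) mult_left_le_one_le power_le_one zero_le_power)
  qed
  then show "0 \<le> 1 - c * q ^ j" by simp
qed

lemma geom_G_has_sum:
  fixes a \<rho> :: real assumes "0 < a" "a \<noteq> 1" "0 \<le> \<rho>" "\<rho> < 1" "a * \<rho> < 1"
  shows "((\<lambda>r. (\<Sum>i<r. a ^ i) * \<rho> ^ r) has_sum (\<rho> / ((1 - \<rho>) * (1 - a * \<rho>)))) UNIV"
proof -
  have "(\<lambda>r. \<rho> ^ r - (a * \<rho>) ^ r) sums (1 / (1 - \<rho>) - 1 / (1 - a * \<rho>))"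
    using assms by (intro sums_diff geometric_sums) (auto simp: abs_mult)
  then have "(\<lambda>r. (\<rho> ^ r - (a * \<rho>) ^ r) / (1 - a)) sums ((1 / (1 - \<rho>) - 1 / (1 - a * \<rho>)) / (1 - a))"
    by (rule sums_divide)
  moreover have "(\<rho> ^ r - (a * \<rho>) ^ r) / (1 - a) = (\<Sum>i<r. a ^ i) * \<rho> ^ r" for r
    using assms by (simp add: sum_gp_strict power_mult_distrib field_simps)
  moreover have "(1 / (1 - \<rho>) - 1 / (1 - a * \<rho>)) / (1 - a) = \<rho> / ((1 - \<rho>) * (1 - a * \<rho>))"
  proof -
    have n: "1 - \<rho> \<noteq> 0" "1 - a * \<rho> \<noteq> 0" "1 - a \<noteq> 0" using assms by auto
    have "1 / (1 - \<rho>) - 1 / (1 - a * \<rho>) = \<rho> * (1 - a) / ((1 - \<rho>) * (1 - a * \<rho>))"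
      using n by (simp add: field_simps)
    then show ?thesis using n by simp
  qed
  ultimately have "(\<lambda>r. (\<Sum>i<r. a ^ i) * \<rho> ^ r) sums (\<rho> / ((1 - \<rho>) * (1 - a * \<rho>)))" by simp
  then show ?thesis
    using assms by (intro sums_nonneg_imp_has_sum) (auto intro!: sum_nonneg mult_nonneg_nonneg)
qed

lemma stepC:
  fixes q a b :: real
  assumes q: "0 < q" "q < 1" and a: "q < a" "a * q < 1" "a \<noteq> 1" and b: "q < b" "b * q < 1" "b \<noteq> 1"
  defines "Q \<equiv> (\<lambda>n. qfin q (q / b) n / qfin q q n * b ^ n)"
  shows "((\<lambda>n. (1 - a) * (1 - b) * (Q n * q ^ Suc n / ((1 - q ^ Suc n) * (1 - a * q ^ Suc n))))
           has_sum (1 - qinf q q * qinf q (a * b * q) / (qinf q (a * q) * qinf q (b * q)))) UNIV"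
proof -
  have a0: "a > 0" and b0: "b > 0" using q a b by auto
  define G where "G r = (\<Sum>i<r. a ^ i)" for r
  define H where "H = (\<lambda>(r, n). G r * q ^ r * Q n * (q ^ r) ^ n)"
  define V where "V r = G r * q ^ r * (qinf q (q * q ^ r) / qinf q (b * q ^ r))" for r
  have G0: "G r \<ge> 0" for r unfolding G_def using a0 by (auto intro!: sum_nonneg)
  have Q0: "Q n \<ge> 0" for n
    unfolding Q_def using q b0 b qfin_q_pos[OF q, of n]
    by (intro mult_nonneg_nonneg divide_nonneg_pos qfin_nonneg) auto
  have H0: "H p \<ge> 0" for p using G0 Q0 q unfolding H_def by (auto simp: case_prod_beta)
  have inner: "((\<lambda>n. H (r, n)) has_sum V r) UNIV" for r
  proof (cases "r = 0")
    case True then show ?thesis by (simp add: H_def V_def G_def)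
  next
    case False
    have bqr: "\<bar>b * q ^ r\<bar> < 1"
    proof -
      have "q ^ r \<le> q ^ 1" using q False by (intro power_decreasing) auto
      then have "b * q ^ r \<le> b * q" using b0 by simp
      moreover have "b * q ^ r > 0" using b0 q by simp
      ultimately show ?thesis using b by linarith
    qed
    from qbinomial[OF q bqr, of "q / b"]
    have "(\<lambda>n. Q n * (q ^ r) ^ n) sums (qinf q (q * q ^ r) / qinf q (b * q ^ r))"
      using b0 by (simp add: Q_def power_mult_distrib mult_ac)
    then have "(\<lambda>n. G r * q ^ r * (Q n * (q ^ r) ^ n)) sums V r"
      unfolding V_def by (rule sums_mult)
    then show ?thesis
      using H0 unfolding H_def by (intro sums_nonneg_imp_has_sum) (auto simp: mult_ac)
  qed
  define K where "K = qinf q q / qinf q (b * q)"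
  define U where "U r = (1 - a ^ r) * q ^ r * (qfin q b r / qfin q q r)" for r
  have qk1: "q ^ k \<le> 1" for k using q by (simp add: power_le_one)
  have VU: "(1 - a) * (1 - b) * V r = K * U r" for r
  proof (cases r)
    case 0 then show ?thesis by (simp add: V_def U_def G_def)
  next
    case (Suc m)
    have s1: "qinf q q = qfin q q r * qinf q (q * q ^ r)"
      using q by (intro qinf_split) (auto simp: power_Suc[symmetric] simp del: power_Suc
          intro!: power_less_one_iff[THEN iffD2] less_imp_neq)
    have bqk: "b * q * q ^ k < 1" for k
    proof -
      have "b * q * q ^ k \<le> b * q * 1" using qk1[of k] b0 q by (intro mult_left_mono) auto
      then show ?thesis using b by linarith
    qed
    have s2: "qinf q (b * q) = qfin q (b * q) m * qinf q (b * q * q ^ m)"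
      using q bqk by (intro qinf_split) (auto simp: less_imp_neq)
    have bq: "b * q * q ^ m = b * q ^ r" by (simp add: Suc)
    have f1: "qfin q b r = (1 - b) * qfin q (b * q) m" by (simp add: Suc qfin_Suc_shift)
    have G1: "(1 - a) * G r = 1 - a ^ r" unfolding G_def using a by (simp add: sum_gp_strict)
    have nz1: "qfin q (b * q) m > 0" unfolding qfin_def using bqk by (intro prod_pos) (auto simp: mult_ac)
    have nz2: "qfin q q r > 0" by (rule qfin_q_pos[OF q])
    have nz3: "qinf q (b * q ^ r) \<noteq> 0"
      using bqk[of "m + k" for k] q by (intro qinf_nonzero) (auto simp: Suc power_add mult_ac less_imp_neq)
    have nz4: "qinf q (b * q) \<noteq> 0"
      using bqk q by (intro qinf_nonzero) (auto simp: mult_ac less_imp_neq)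
    have "V r = G r * q ^ r * ((qinf q q / qfin q q r) / (qinf q (b * q) / qfin q (b * q) m))"
      unfolding V_def using s1 s2 bq nz1 nz2 nz3 nz4 by (auto simp: field_simps)
    then have "(1 - a) * (1 - b) * V r = ((1 - a) * G r) * q ^ r * ((1 - b) * qfin q (b * q) m) / qfin q q r * K"
      unfolding K_def using nz1 nz2 nz4 by (simp add: field_simps)
    also have "\<dots> = (1 - a ^ r) * q ^ r * qfin q b r / qfin q q r * K" by (simp only: G1 f1[symmetric])
    also have "\<dots> = K * U r" unfolding U_def by simp
    finally show ?thesis .
  qed
  have aq: "\<bar>a * q\<bar> < 1" using a0 q a by (simp add: abs_mult)
  have q1: "\<bar>q\<bar> < 1" using q by simp
  have Usum: "U sums (qinf q (b * q) / qinf q q - qinf q (b * (a * q)) / qinf q (a * q))"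
  proof -
    have e: "U = (\<lambda>r. qfin q b r / qfin q q r * q ^ r - qfin q b r / qfin q q r * (a * q) ^ r)"
      by (simp add: U_def fun_eq_iff power_mult_distrib algebra_simps)
    show ?thesis unfolding e by (rule sums_diff[OF qbinomial[OF q q1, of b] qbinomial[OF q aq, of b]])
  qed
  have ab: "(1 - a) * (1 - b) \<noteq> 0" using a b by auto
  have "V r = K / ((1 - a) * (1 - b)) * U r" for r using VU[of r] ab by (simp add: field_simps)
  then have "V sums (K / ((1 - a) * (1 - b)) * (qinf q (b * q) / qinf q q - qinf q (b * (a * q)) / qinf q (a * q)))"
    using sums_mult[OF Usum] by presburger
  moreover have V0: "V r \<ge> 0" for r using inner[of r] H0 by (rule has_sum_nonneg)
  ultimately have Vhas: "(V has_sum (K / ((1 - a) * (1 - b)) * (qinf q (b * q) / qinf q q - qinf q (b * (a * q)) / qinf q (a * q)))) UNIV"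
    by (intro sums_nonneg_imp_has_sum)
  have Hsum: "H summable_on (UNIV \<times> UNIV)"
    using summable_on_SigmaI[of UNIV H "\<lambda>_. UNIV" V, OF inner] Vhas H0 by (auto simp: has_sum_imp_summable)
  have Hhas: "(H has_sum (K / ((1 - a) * (1 - b)) * (qinf q (b * q) / qinf q q - qinf q (b * (a * q)) / qinf q (a * q)))) (UNIV \<times> UNIV)"
    by (rule has_sum_SigmaI[OF inner Vhas Hsum])
  then have Hhas': "((\<lambda>(n, r). H (r, n)) has_sum (K / ((1 - a) * (1 - b)) * (qinf q (b * q) / qinf q q - qinf q (b * (a * q)) / qinf q (a * q)))) (UNIV \<times> UNIV)"
    by (subst (asm) has_sum_swap)
  have Yn: "((\<lambda>r. H (r, n)) has_sum (Q n * (q ^ Suc n / ((1 - q ^ Suc n) * (1 - a * q ^ Suc n))))) UNIV" for n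
  proof -
    have r1: "q ^ Suc n < 1" using q by (intro power_less_one_iff[THEN iffD2]) auto
    have r2: "a * q ^ Suc n < 1"
    proof -
      have "q ^ Suc n \<le> q ^ 1" using q by (intro power_decreasing) auto
      then have "a * q ^ Suc n \<le> a * q" using a0 by (intro mult_left_mono) auto
      then show ?thesis using a by simp
    qed
    have "((\<lambda>r. G r * (q ^ Suc n) ^ r) has_sum (q ^ Suc n / ((1 - q ^ Suc n) * (1 - a * q ^ Suc n)))) UNIV"
      unfolding G_def using a0 a r1 r2 q by (intro geom_G_has_sum) auto
    from has_sum_cmult_right[OF this, of "Q n"] show ?thesis
      unfolding H_def by (simp add: power_mult[symmetric] mult_ac power_Suc[symmetric] power_add[symmetric] del: power_Suc)
  qed
  have "((\<lambda>n. Q n * (q ^ Suc n / ((1 - q ^ Suc n) * (1 - a * q ^ Suc n)))) has_sum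
         (K / ((1 - a) * (1 - b)) * (qinf q (b * q) / qinf q q - qinf q (b * (a * q)) / qinf q (a * q)))) UNIV"
    using has_sum_SigmaD[OF Hhas'[unfolded UNIV_Times_UNIV[symmetric]]] Yn by (auto simp: case_prod_beta)
  from has_sum_cmult_right[OF this, of "(1 - a) * (1 - b)"]
  have "((\<lambda>n. (1 - a) * (1 - b) * (Q n * (q ^ Suc n / ((1 - q ^ Suc n) * (1 - a * q ^ Suc n))))) has_sum
         (K * (qinf q (b * q) / qinf q q - qinf q (b * (a * q)) / qinf q (a * q)))) UNIV"
    using ab by simp
  moreover have "K * (qinf q (b * q) / qinf q q - qinf q (b * (a * q)) / qinf q (a * q)) =
      1 - qinf q q * qinf q (a * b * q) / (qinf q (a * q) * qinf q (b * q))"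
  proof -
    have bqk: "b * q * q ^ k < 1" for k
    proof -
      have "b * q * q ^ k \<le> b * q * 1" using qk1[of k] b0 q by (intro mult_left_mono) auto
      then show ?thesis using b by linarith
    qed
    have nz4: "qinf q (b * q) \<noteq> 0"
      using bqk q by (intro qinf_nonzero) (auto simp: mult_ac less_imp_neq)
    have nz5: "qinf q q \<noteq> 0"
      using q by (intro qinf_nonzero) (auto simp: power_Suc[symmetric] simp del: power_Suc
        intro!: power_less_one_iff[THEN iffD2] less_imp_neq)
    show ?thesis unfolding K_def using nz4 nz5 by (simp add: field_simps mult_ac)
  qed
  ultimately show ?thesis by (simp add: mult_ac)
qed



lemma prod_nth_distinct:
  assumes "distinct xs"
  shows "(\<Prod>j<length xs. g (xs ! j)) = (\<Prod>x\<in>set xs. g x)"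
  using prod.reindex_bij_betw[OF bij_betw_nth[OF assms refl refl], of g] by simp

definition lst :: "nat \<times> nat set \<Rightarrow> nat list" where
  "lst p = fst p # rev (sorted_list_of_set (snd p))"

lemma lst_bij:
  "bij_betw lst {(k::nat, S). 1 \<le> k \<and> S \<subseteq> {1..<k} \<and> card S = n}
     {ks::nat list. length ks = Suc n \<and> sorted_wrt (>) ks \<and> (\<forall>k\<in>set ks. k > 0)}"
proof (rule bij_betw_byWitness[where f' = "\<lambda>ks. (hd ks, set (tl ks))"])
  show "\<forall>p\<in>{(k::nat, S). 1 \<le> k \<and> S \<subseteq> {1..<k} \<and> card S = n}. (hd (lst p), set (tl (lst p))) = p"
  proof
    fix p assume "p \<in> {(k::nat, S). 1 \<le> k \<and> S \<subseteq> {1..<k} \<and> card S = n}"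
    then obtain k S where p: "p = (k, S)" and "1 \<le> k" "S \<subseteq> {1..<k}" by blast
    then have "finite S" using finite_subset by blast
    then show "(hd (lst p), set (tl (lst p))) = p" by (simp add: lst_def p)
  qed
  show "\<forall>ks\<in>{ks::nat list. length ks = Suc n \<and> sorted_wrt (>) ks \<and> (\<forall>k\<in>set ks. k > 0)}. lst (hd ks, set (tl ks)) = ks"
  proof
    fix ks :: "nat list" assume "ks \<in> {ks::nat list. length ks = Suc n \<and> sorted_wrt (>) ks \<and> (\<forall>k\<in>set ks. k > 0)}"
    then have l: "length ks = Suc n" and s: "sorted_wrt (>) ks" by auto
    then obtain k ks' where ks: "ks = k # ks'" by (cases ks) auto
    have "sorted_wrt (<) (rev ks')" using s ks by (simp add: sorted_wrt_rev)
    then have "sorted (rev ks')" "distinct (rev ks')" by (auto simp: strict_sorted_iff)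
    then have "sorted_list_of_set (set ks') = rev ks'"
      by (metis set_rev sorted_list_of_set_sort_remdups distinct_remdups_id sorted_sort_id)
    then show "lst (hd ks, set (tl ks)) = ks" by (simp add: lst_def ks)
  qed
  show "lst ` {(k::nat, S). 1 \<le> k \<and> S \<subseteq> {1..<k} \<and> card S = n} \<subseteq> {ks::nat list. length ks = Suc n \<and> sorted_wrt (>) ks \<and> (\<forall>k\<in>set ks. k > 0)}"
  proof
    fix ks assume "ks \<in> lst ` {(k::nat, S). 1 \<le> k \<and> S \<subseteq> {1..<k} \<and> card S = n}"
    then obtain k S where ks: "ks = lst (k, S)" and k: "1 \<le> k" and S: "S \<subseteq> {1..<k}" and c: "card S = n"
      by blast
    then have fS: "finite S" using finite_subset by blast
    have len: "length ks = Suc n" using c by (simp add: lst_def ks)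
    have "sorted_wrt (<) (sorted_list_of_set S)" by (rule strict_sorted_list_of_set)
    then have srt: "sorted_wrt (>) ks"
      using S fS by (auto simp: lst_def sorted_wrt_rev ks)
    have pos: "\<forall>j\<in>set ks. 0 < j" using S fS k by (auto simp: lst_def ks)
    show "ks \<in> {ks::nat list. length ks = Suc n \<and> sorted_wrt (>) ks \<and> (\<forall>k\<in>set ks. k > 0)}"
      using len srt pos by blast
  qed
  show "(\<lambda>ks. (hd ks, set (tl ks))) ` {ks::nat list. length ks = Suc n \<and> sorted_wrt (>) ks \<and> (\<forall>k\<in>set ks. k > 0)} \<subseteq> {(k::nat, S). 1 \<le> k \<and> S \<subseteq> {1..<k} \<and> card S = n}"
  proof
    fix p assume "p \<in> (\<lambda>ks. (hd ks, set (tl ks))) ` {ks::nat list. length ks = Suc n \<and> sorted_wrt (>) ks \<and> (\<forall>k\<in>set ks. k > 0)}"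
    then obtain ks :: "nat list" where p: "p = (hd ks, set (tl ks))" and l: "length ks = Suc n"
      and s: "sorted_wrt (>) ks" and ps: "\<forall>k\<in>set ks. k > 0" by blast
    then obtain k ks' where ks: "ks = k # ks'" by (cases ks) auto
    have k1: "1 \<le> k" using ps ks by auto
    have sub: "set ks' \<subseteq> {1..<k}" using ps s ks by auto
    have "sorted_wrt (<) (rev ks')" using s ks by (simp add: sorted_wrt_rev)
    then have "distinct ks'" by (auto simp: strict_sorted_iff)
    then have "card (set ks') = n" using l ks by (simp add: distinct_card)
    then show "p \<in> {(k::nat, S). 1 \<le> k \<and> S \<subseteq> {1..<k} \<and> card S = n}"
      using k1 sub by (simp add: p ks)
  qed
qed
lemma qzeta_reindex:
  fixes q :: real
  shows "qzeta q ((m + 2) # replicate n 1) =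
    infsum (\<lambda>(k, S). q ^ ((m + 1) * k) / qbr q (real k) ^ (m + 2) * (\<Prod>j\<in>S. 1 / qbr q (real j)))
      {(k, S). 1 \<le> k \<and> S \<subseteq> {1..<k} \<and> card S = n}"
proof -
  let ?s = "(m + 2) # replicate n 1"
  let ?f = "\<lambda>ks. \<Prod>j<length ?s. q ^ ((?s ! j - 1) * (ks ! j)) / (qbr q (real (ks ! j))) ^ (?s ! j)"
  have "qzeta q ?s = infsum ?f {ks. length ks = Suc n \<and> sorted_wrt (>) ks \<and> (\<forall>k\<in>set ks. k > 0)}"
    unfolding qzeta_def by simp
  also have "\<dots> = infsum (\<lambda>p. ?f (lst p)) {(k, S). 1 \<le> k \<and> S \<subseteq> {1..<k} \<and> card S = n}"
    by (rule infsum_reindex_bij_betw[OF lst_bij, symmetric])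
  also have "\<dots> = infsum (\<lambda>(k, S). q ^ ((m + 1) * k) / qbr q (real k) ^ (m + 2) * (\<Prod>j\<in>S. 1 / qbr q (real j)))
      {(k, S). 1 \<le> k \<and> S \<subseteq> {1..<k} \<and> card S = n}"
  proof (rule infsum_cong)
    fix p assume "p \<in> {(k::nat, S). 1 \<le> k \<and> S \<subseteq> {1..<k} \<and> card S = n}"
    then obtain k S where p: "p = (k, S)" and k: "1 \<le> k" and S: "S \<subseteq> {1..<k}" and c: "n = card S"
      by auto
    then have fS: "finite S" using finite_subset by blast
    define xs where "xs = rev (sorted_list_of_set S)"
    have d: "distinct xs" "set xs = S" "length xs = card S" using fS by (auto simp: xs_def)
    have "?f (lst (k, S)) = (\<Prod>j<Suc (card S). q ^ ((?s ! j - 1) * ((k # xs) ! j)) / (qbr q (real ((k # xs) ! j))) ^ (?s ! j))"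
      using c by (simp add: lst_def xs_def)
    also have "\<dots> = q ^ ((m + 1) * k) / qbr q (real k) ^ (m + 2) * (\<Prod>j<length xs. 1 / qbr q (real (xs ! j)))"
      using c d by (subst prod.lessThan_Suc_shift) (auto intro!: prod.cong)
    also have "\<dots> = q ^ ((m + 1) * k) / qbr q (real k) ^ (m + 2) * (\<Prod>j\<in>S. 1 / qbr q (real j))"
      using prod_nth_distinct[OF d(1), of "\<lambda>x. 1 / qbr q (real x)"] d by simp
    finally show "?f (lst p) = (case p of (k, S) \<Rightarrow> q ^ ((m + 1) * k) / qbr q (real k) ^ (m + 2) * (\<Prod>j\<in>S. 1 / qbr q (real j)))"
      by (simp add: p)
  qed
  finally show ?thesis .
qed



lemma br_eq: "0 < q \<Longrightarrow> qbr q (real k) = (1 - q ^ k) / (1 - q)"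
  by (simp add: qbr_def powr_realpow)

lemma br_pos: "0 < q \<Longrightarrow> q < 1 \<Longrightarrow> 1 \<le> k \<Longrightarrow> qbr q (real k) > 0"
  by (simp add: br_eq power_less_one_iff)

definition FF :: "real \<Rightarrow> real \<Rightarrow> real \<Rightarrow> nat \<times> (nat \<times> nat set) \<Rightarrow> real" where
  "FF q t s p = (case p of (m, (k, S)) \<Rightarrow> (-1) ^ (m + card S) * t ^ (m + 1) * s ^ (card S + 1) *
      (q ^ ((m + 1) * k) / qbr q (real k) ^ (m + 2) * (\<Prod>j\<in>S. 1 / qbr q (real j))))"

definition DD :: "real \<Rightarrow> real \<Rightarrow> nat \<Rightarrow> real" where
  "DD q t k = t * q ^ k / (qbr q (real k) * (qbr q (real k) + t * q ^ k))"

definition PP :: "real \<Rightarrow> real \<Rightarrow> nat \<Rightarrow> real" where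
  "PP q s k = s * (\<Prod>j\<in>{1..<k}. 1 - s / qbr q (real j))"

lemma geom_m:
  fixes q t :: real
  assumes q: "0 < q" "q < 1" and k: "1 \<le> k" and t: "\<bar>t\<bar> * q ^ k < qbr q (real k)"
  shows "((\<lambda>m. (-1) ^ m * t ^ (m + 1) * (q ^ ((m + 1) * k) / qbr q (real k) ^ (m + 2))) has_sum DD q t k) UNIV"
proof -
  define br where "br = qbr q (real k)"
  have br: "br > 0" unfolding br_def using br_pos[OF q k] .
  define u where "u = t * q ^ k / br"
  have u: "\<bar>u\<bar> < 1" using t br q by (simp add: u_def abs_mult abs_divide br_def)
  have "(\<lambda>m. (-u) ^ m) sums (1 / (1 - (-u)))" using u by (intro geometric_sums) simp
  then have "(\<lambda>m. u / br * (-u) ^ m) sums (u / br * (1 / (1 - (-u))))" by (rule sums_mult)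
  moreover have eq: "u / br * (-u) ^ m = (-1) ^ m * t ^ (m + 1) * (q ^ ((m + 1) * k) / br ^ (m + 2))" for m
    unfolding u_def using br
    by (simp add: power_minus[of "t * q ^ k / br"] power_mult_distrib power_divide power_mult[symmetric]
        mult.commute[of _ k] field_simps power_add)
  moreover have "u / br * (1 / (1 - (-u))) = DD q t k"
  proof -
    have "1 + u \<noteq> 0" using u by auto
    then have "br + t * q ^ k \<noteq> 0" using br by (simp add: u_def field_simps)
    have e: "1 - (-u) = (br + t * q ^ k) / br" using br unfolding u_def by (subst add_divide_distrib) simp
    have "u / br * (1 / (1 - (-u))) = (t * q ^ k / br) / br * (br / (br + t * q ^ k))"
      by (subst e) (simp add: u_def)
    also have "\<dots> = t * q ^ k / (br * (br + t * q ^ k))"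
      using br \<open>br + t * q ^ k \<noteq> 0\<close> by (simp add: divide_simps)
    finally show ?thesis by (simp add: DD_def br_def)
  qed
  ultimately have s: "(\<lambda>m. (-1) ^ m * t ^ (m + 1) * (q ^ ((m + 1) * k) / br ^ (m + 2))) sums DD q t k" by simp
  have "summable (\<lambda>m. norm (u / br * (-u) ^ m))"
    using u by (simp add: norm_mult norm_power abs_mult power_abs summable_mult summable_geometric del: mult_minus_left)
  then have "summable (\<lambda>m. norm ((-1) ^ m * t ^ (m + 1) * (q ^ ((m + 1) * k) / br ^ (m + 2))))"
    by (simp only: eq)
  from norm_summable_imp_has_sum[OF this s] show ?thesis by (simp add: br_def)
qed

lemma sum_pow_prod:
  fixes s :: real and g :: "nat \<Rightarrow> real"
  assumes "finite A"
  shows "(\<Sum>X\<in>Pow A. (-1) ^ card X * s ^ (card X + 1) * (\<Prod>j\<in>X. g j)) = s * (\<Prod>j\<in>A. 1 - s * g j)"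
proof -
  have "(\<Prod>j\<in>A. (- s * g j) + 1) = (\<Sum>X\<in>Pow A. (\<Prod>j\<in>X. - s * g j) * (\<Prod>j\<in>A - X. 1))"
    by (rule prod_add[OF assms])
  also have "\<dots> = (\<Sum>X\<in>Pow A. (-1) ^ card X * s ^ card X * (\<Prod>j\<in>X. g j))"
  proof (rule sum.cong[OF refl])
    fix X assume "X \<in> Pow A"
    have "(\<Prod>j\<in>X. - s * g j) = (\<Prod>j\<in>X. - s) * (\<Prod>j\<in>X. g j)" by (rule prod.distrib)
    also have "\<dots> = (-1) ^ card X * s ^ card X * (\<Prod>j\<in>X. g j)"
      by (simp add: power_minus[of s])
    finally show "(\<Prod>j\<in>X. - s * g j) * (\<Prod>j\<in>A - X. 1) = (-1) ^ card X * s ^ card X * (\<Prod>j\<in>X. g j)"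
      by simp
  qed
  finally have "(\<Sum>X\<in>Pow A. (-1) ^ card X * s ^ card X * (\<Prod>j\<in>X. g j)) = (\<Prod>j\<in>A. 1 - s * g j)"
    by simp
  then have "s * (\<Sum>X\<in>Pow A. (-1) ^ card X * s ^ card X * (\<Prod>j\<in>X. g j)) = s * (\<Prod>j\<in>A. 1 - s * g j)"
    by simp
  then show ?thesis by (simp add: sum_distrib_left mult_ac)
qed

lemma inner_k:
  fixes q t s :: real
  assumes q: "0 < q" "q < 1" and k: "1 \<le> k" and t: "\<bar>t\<bar> * q ^ k < qbr q (real k)"
  shows "((\<lambda>(m, S). FF q t s (m, (k, S))) has_sum DD q t k * PP q s k) ((UNIV::nat set) \<times> Pow {1..<k})"
proof -
  define w where "w S = (-1) ^ card S * s ^ (card S + 1) * (\<Prod>j\<in>S. 1 / qbr q (real j))" for S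
  have each: "((\<lambda>(m, S). FF q t s (m, (k, S))) has_sum (DD q t k * w S)) ((\<lambda>m. (m, S)) ` UNIV)" for S
  proof -
    have "((\<lambda>m. (-1) ^ m * t ^ (m + 1) * (q ^ ((m + 1) * k) / qbr q (real k) ^ (m + 2)) * w S) has_sum (DD q t k * w S)) UNIV"
      by (rule has_sum_cmult_left[OF geom_m[OF q k t]])
    moreover have "(-1) ^ m * t ^ (m + 1) * (q ^ ((m + 1) * k) / qbr q (real k) ^ (m + 2)) * w S = FF q t s (m, (k, S))" for m
      by (simp add: FF_def w_def power_add mult_ac)
    ultimately have "((\<lambda>m. FF q t s (m, (k, S))) has_sum (DD q t k * w S)) UNIV" by simp
    then show ?thesis
      by (subst has_sum_reindex) (auto simp: inj_on_def o_def)
  qed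
  have "((\<lambda>(m, S). FF q t s (m, (k, S))) has_sum (\<Sum>S\<in>Pow {1..<k}. DD q t k * w S)) (\<Union>S\<in>Pow {1..<k}. (\<lambda>m. (m, S)) ` UNIV)"
    by (rule sum_has_sum) (use each in auto)
  moreover have "(\<Union>S\<in>Pow {1..<k}. (\<lambda>m. (m, S)) ` UNIV) = (UNIV \<times> Pow {1..<k} :: (nat \<times> nat set) set)"
    by auto
  moreover have "(\<Sum>S\<in>Pow {1..<k}. DD q t k * w S) = DD q t k * PP q s k"
    unfolding sum_distrib_left[symmetric] w_def PP_def
    using sum_pow_prod[of "{1..<k}" s "\<lambda>j. 1 / qbr q (real j)"] by simp
  ultimately show ?thesis by simp
qed

lemma qpow_lt1: "0 < (q::real) \<Longrightarrow> q < 1 \<Longrightarrow> 0 < n \<Longrightarrow> q ^ n < 1"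
  by (rule power_less_one_iff[THEN iffD2]) auto

lemma prod_Q:
  fixes q b :: real assumes q: "0 < q" "q < 1" and b: "b > 0"
  shows "(\<Prod>j\<in>{1..<Suc n}. 1 - ((1 - b) / (1 - q)) / qbr q (real j)) = qfin q (q / b) n / qfin q q n * b ^ n"
proof (induction n)
  case 0 then show ?case by (simp add: qfin_def)
next
  case (Suc n)
  have qn: "1 - q ^ Suc n \<noteq> 0" "1 - q \<noteq> 0" using q qpow_lt1[OF q, of "Suc n"] by (auto simp del: power_Suc)
  have pos: "qfin q q n > 0" by (rule qfin_q_pos[OF q])
  have "(\<Prod>j\<in>{1..<Suc (Suc n)}. 1 - ((1 - b) / (1 - q)) / qbr q (real j)) =
        (\<Prod>j\<in>{1..<Suc n}. 1 - ((1 - b) / (1 - q)) / qbr q (real j)) * (1 - ((1 - b) / (1 - q)) / qbr q (real (Suc n)))"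
    by (subst prod.atLeastLessThan_Suc) auto
  also have "1 - ((1 - b) / (1 - q)) / qbr q (real (Suc n)) = (b - q ^ Suc n) / (1 - q ^ Suc n)"
  proof -
    have "((1 - b) / (1 - q)) / ((1 - q ^ Suc n) / (1 - q)) = (1 - b) / (1 - q ^ Suc n)"
      using qn by (simp add: divide_simps del: power_Suc)
    moreover have "1 - (1 - b) / (1 - q ^ Suc n) = (b - q ^ Suc n) / (1 - q ^ Suc n)"
      using qn by (simp add: divide_simps del: power_Suc)
    ultimately show ?thesis unfolding br_eq[OF q(1), of "Suc n"] using q by simp
  qed
  moreover have "qfin q (q / b) (Suc n) / qfin q q (Suc n) * b ^ Suc n =
      (qfin q (q / b) n / qfin q q n * b ^ n) * ((b - q ^ Suc n) / (1 - q ^ Suc n))"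
  proof -
    define X where "X = qfin q (q / b) n"
    define Z where "Z = qfin q q n"
    have e1: "(1 - q / b * q ^ n) * b = b - q ^ Suc n" using b by (simp add: field_simps)
    have "qfin q (q / b) (Suc n) / qfin q q (Suc n) * b ^ Suc n =
        (X * (1 - q / b * q ^ n)) / (Z * (1 - q ^ Suc n)) * (b ^ n * b)"
      by (simp add: qfin_Suc X_def Z_def mult_ac)
    also have "\<dots> = (X / Z * b ^ n) * (((1 - q / b * q ^ n) * b) / (1 - q ^ Suc n))"
      using qn pos by (simp add: Z_def divide_simps del: power_Suc)
    finally show ?thesis unfolding e1 X_def Z_def .
  qed
  ultimately show ?case using Suc.IH by simp
qed

lemma DP_eq:
  fixes q a b :: real
  assumes q: "0 < q" "q < 1" and b: "b > 0" and aq: "a * q ^ Suc n \<noteq> 1"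
  shows "DD q ((1 - a) / (1 - q)) (Suc n) * PP q ((1 - b) / (1 - q)) (Suc n) =
    (1 - a) * (1 - b) * (qfin q (q / b) n / qfin q q n * b ^ n * q ^ Suc n / ((1 - q ^ Suc n) * (1 - a * q ^ Suc n)))"
proof -
  define Q where "Q = qfin q (q / b) n / qfin q q n * b ^ n"
  define r where "r = q ^ Suc n"
  have qn: "1 - r \<noteq> 0" "1 - q \<noteq> 0" "1 - a * r \<noteq> 0"
    using q aq qpow_lt1[OF q, of "Suc n"] by (auto simp: r_def simp del: power_Suc)
  have br: "qbr q (real (Suc n)) = (1 - r) / (1 - q)" unfolding r_def by (rule br_eq[OF q(1)])
  have "qbr q (real (Suc n)) + (1 - a) / (1 - q) * r = (1 - a * r) / (1 - q)"
    unfolding br using qn by (simp add: field_simps)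
  then have DD: "DD q ((1 - a) / (1 - q)) (Suc n) = (1 - a) * (1 - q) * r / ((1 - r) * (1 - a * r))"
    unfolding DD_def r_def[symmetric] br using qn by (simp add: divide_simps)
  have PP: "PP q ((1 - b) / (1 - q)) (Suc n) = (1 - b) / (1 - q) * Q"
    unfolding PP_def Q_def using prod_Q[OF q b] by simp
  show ?thesis unfolding DD PP Q_def[symmetric] r_def[symmetric] using qn by (simp add: divide_simps)
qed

lemma Suc_image_UNIV: "Suc ` UNIV = {1::nat..}"
proof (intro equalityI subsetI)
  fix x :: nat assume "x \<in> {1..}"
  then have "x = Suc (x - 1)" by auto
  then show "x \<in> Suc ` UNIV" by blast
qed auto

lemma kseries:
  fixes q a b :: real
  assumes q: "0 < q" "q < 1" and a: "q < a" "a * q < 1" "a \<noteq> 1" and b: "q < b" "b * q < 1" "b \<noteq> 1"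
  shows "((\<lambda>k. DD q ((1 - a) / (1 - q)) k * PP q ((1 - b) / (1 - q)) k) has_sum
           (1 - qinf q q * qinf q (a * b * q) / (qinf q (a * q) * qinf q (b * q)))) {1..}"
proof -
  have aqn: "a * q ^ Suc n \<noteq> 1" for n
  proof -
    have "q ^ Suc n \<le> q ^ 1" using q by (intro power_decreasing) auto
    then have "a * q ^ Suc n \<le> a * q" using a q by (intro mult_left_mono) auto
    then show ?thesis using a by auto
  qed
  have "((\<lambda>n. DD q ((1 - a) / (1 - q)) (Suc n) * PP q ((1 - b) / (1 - q)) (Suc n)) has_sum
           (1 - qinf q q * qinf q (a * b * q) / (qinf q (a * q) * qinf q (b * q)))) UNIV"
    using stepC[OF q a b] DP_eq[OF q _ aqn, of b] b q by simp
  then show ?thesis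
    unfolding Suc_image_UNIV[symmetric] by (subst has_sum_reindex) (auto simp: o_def)
qed

lemma has_sum_partition:
  fixes f :: "'a \<Rightarrow> real" and h :: "'a \<Rightarrow> 'b"
  assumes "f summable_on A"
  shows "((\<lambda>n. infsum f {x\<in>A. h x = n}) has_sum infsum f A) UNIV"
proof -
  have bij: "bij_betw snd (Sigma UNIV (\<lambda>n. {x\<in>A. h x = n})) A"
    by (rule bij_betwI[where g = "\<lambda>x. (h x, x)"]) auto
  have "(\<lambda>p. f (snd p)) summable_on (Sigma UNIV (\<lambda>n. {x\<in>A. h x = n}))"
    using summable_on_reindex_bij_betw[OF bij, of f] assms by simp
  then have "((\<lambda>p. f (snd p)) has_sum infsum (\<lambda>p. f (snd p)) (Sigma UNIV (\<lambda>n. {x\<in>A. h x = n})))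
      (Sigma UNIV (\<lambda>n. {x\<in>A. h x = n}))" by (rule has_sum_infsum)
  moreover have "infsum (\<lambda>p. f (snd p)) (Sigma UNIV (\<lambda>n. {x\<in>A. h x = n})) = infsum f A"
    by (rule infsum_reindex_bij_betw[OF bij])
  ultimately have hs: "((\<lambda>p. f (snd p)) has_sum infsum f A) (Sigma UNIV (\<lambda>n. {x\<in>A. h x = n}))" by simp
  have inner: "((\<lambda>y. f (snd (n, y))) has_sum infsum f {x\<in>A. h x = n}) {x\<in>A. h x = n}" for n
  proof -
    have "f summable_on {x\<in>A. h x = n}" using assms by (rule summable_on_subset_banach) auto
    then show ?thesis by (simp add: has_sum_infsum)
  qed
  show ?thesis by (rule has_sum_Sigma'[OF hs inner])
qed

lemma tcond:
  fixes q a :: real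
  assumes q: "0 < q" "q < 1" and a: "q < a" "a * q < 1" and k: "1 \<le> k"
  shows "\<bar>(1 - a) / (1 - q)\<bar> * q ^ k < qbr q (real k)"
proof -
  have "(1 + \<bar>1 - a\<bar>) * q < 1"
  proof (cases "a \<ge> 1")
    case True then show ?thesis using a by (simp add: algebra_simps)
  next
    case False
    then have "(1 + \<bar>1 - a\<bar>) * q = (2 - a) * q" by simp
    also have "\<dots> < (2 - q) * q" using a q by (intro mult_strict_right_mono) auto
    also have "\<dots> \<le> 1"
    proof -
      have "0 \<le> (1 - q) ^ 2" by simp
      then show ?thesis by (simp add: power2_eq_square algebra_simps)
    qed
    finally show ?thesis .
  qed
  moreover have "q ^ k \<le> q ^ 1" using q k by (intro power_decreasing) auto
  ultimately have "(1 + \<bar>1 - a\<bar>) * q ^ k < 1"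
    by (smt (verit) mult_left_mono power_one_right abs_ge_zero)
  then have "\<bar>1 - a\<bar> * q ^ k < 1 - q ^ k" by (simp add: algebra_simps)
  then show ?thesis using q by (simp add: br_eq abs_divide divide_strict_right_mono)
qed

lemma absq:
  fixes q a :: real
  assumes q: "0 < q" "q < 1" and a: "q < a" "a * q < 1"
  shows "(1 + \<bar>1 - a\<bar>) * q < 1"
proof (cases "a \<ge> 1")
  case True then show ?thesis using a by (simp add: algebra_simps)
next
  case False
  then have "(1 + \<bar>1 - a\<bar>) * q = (2 - a) * q" by simp
  also have "\<dots> < (2 - q) * q" using a q by (intro mult_strict_right_mono) auto
  also have "\<dots> \<le> 1"
  proof -
    have "0 \<le> (1 - q) ^ 2" by simp
    then show ?thesis by (simp add: power2_eq_square algebra_simps)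
  qed
  finally show ?thesis .
qed

lemma FF_abs:
  fixes q t s :: real
  assumes q: "0 < q" "q < 1" and k: "1 \<le> k" and S: "S \<subseteq> {1..<k}"
  shows "FF q (- \<bar>t\<bar>) (- \<bar>s\<bar>) (m, (k, S)) = \<bar>FF q t s (m, (k, S))\<bar>"
proof -
  define W where "W = q ^ ((m + 1) * k) / qbr q (real k) ^ (m + 2) * (\<Prod>j\<in>S. 1 / qbr q (real j))"
  define c where "c = card S"
  have brk: "qbr q (real k) > 0" using br_pos[OF q k] .
  have P0: "(\<Prod>j\<in>S. 1 / qbr q (real j)) \<ge> 0"
  proof (rule prod_nonneg)
    fix j assume "j \<in> S"
    then have "1 \<le> j" using S by auto
    then show "0 \<le> 1 / qbr q (real j)" using br_pos[OF q] by (simp add: less_imp_le)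
  qed
  have W0: "W \<ge> 0"
    unfolding W_def using brk P0 q by (intro mult_nonneg_nonneg divide_nonneg_pos) auto
  have e: "m + c + (m + 1) + (c + 1) = 2 * (m + c + 1)" by simp
  have sign: "(-1::real) ^ (m + c) * (-1) ^ (m + 1) * (-1) ^ (c + 1) = 1"
  proof -
    have "(-1::real) ^ (m + c) * (-1) ^ (m + 1) * (-1) ^ (c + 1) = (-1) ^ (m + c + (m + 1) + (c + 1))"
      by (simp only: power_add)
    also have "\<dots> = 1" unfolding e power_mult by simp
    finally show ?thesis .
  qed
  have "FF q (- \<bar>t\<bar>) (- \<bar>s\<bar>) (m, (k, S)) =
      ((-1) ^ (m + c) * (-1) ^ (m + 1) * (-1) ^ (c + 1)) * (\<bar>t\<bar> ^ (m + 1) * \<bar>s\<bar> ^ (c + 1) * W)"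
    unfolding FF_def W_def c_def by (simp only: prod.case power_minus[of "\<bar>t\<bar>"] power_minus[of "\<bar>s\<bar>"] mult_ac)
  also have "\<dots> = \<bar>t\<bar> ^ (m + 1) * \<bar>s\<bar> ^ (c + 1) * W" by (simp only: sign mult_1)
  also have "\<dots> = \<bar>FF q t s (m, (k, S))\<bar>"
  proof -
    have "FF q t s (m, (k, S)) = (-1) ^ (m + c) * t ^ (m + 1) * s ^ (c + 1) * W"
      unfolding FF_def W_def c_def by simp
    then show ?thesis using W0 by (simp add: abs_mult power_abs)
  qed
  finally show ?thesis .
qed

lemma main_series:
  fixes q a b :: real
  assumes q: "0 < q" "q < 1" and a: "q < a" "a * q < 1" "a \<noteq> 1" and b: "q < b" "b * q < 1" "b \<noteq> 1"
  shows "(\<Sum>m. \<Sum>n. (-1) ^ (m + n) * ((1 - a) / (1 - q)) ^ (m + 1) * ((1 - b) / (1 - q)) ^ (n + 1)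
            * qzeta q ((m + 2) # replicate n 1))
         = 1 - qinf q q * qinf q (a * b * q) / (qinf q (a * q) * qinf q (b * q))"
proof -
  define t where "t = (1 - a) / (1 - q)"
  define s where "s = (1 - b) / (1 - q)"
  define R where "R = 1 - qinf q q * qinf q (a * b * q) / (qinf q (a * q) * qinf q (b * q))"
  define I where "I = {(k::nat, S). 1 \<le> k \<and> S \<subseteq> {1..<k}}"
  define J where "J = (UNIV :: nat set) \<times> I"
  define Sig where "Sig = Sigma {1::nat..} (\<lambda>k. (UNIV::nat set) \<times> Pow {1..<k})"
  define \<phi> where "\<phi> = (\<lambda>(k::nat, (m::nat, S::nat set)). (m, (k, S)))"
  have bij: "bij_betw \<phi> Sig J"
    by (rule bij_betwI[where g = "\<lambda>(m, (k, S)). (k, (m, S))"]) (auto simp: \<phi>_def Sig_def J_def I_def)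
  define a' where "a' = 1 + \<bar>1 - a\<bar>"
  define b' where "b' = 1 + \<bar>1 - b\<bar>"
  have a': "q < a'" "a' * q < 1" "a' \<noteq> 1" using absq[OF q a(1,2)] a q by (auto simp: a'_def)
  have b': "q < b'" "b' * q < 1" "b' \<noteq> 1" using absq[OF q b(1,2)] b q by (auto simp: b'_def)
  have t': "(1 - a') / (1 - q) = - \<bar>t\<bar>" using q by (simp add: t_def a'_def abs_divide)
  have s': "(1 - b') / (1 - q) = - \<bar>s\<bar>" using q by (simp add: s_def b'_def abs_divide)
  have tk: "\<bar>t\<bar> * q ^ k < qbr q (real k)" if "1 \<le> k" for k
    using tcond[OF q a(1,2) that] by (simp add: t_def)
  have tk': "\<bar>- \<bar>t\<bar>\<bar> * q ^ k < qbr q (real k)" if "1 \<le> k" for k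
    using tk[OF that] by simp
  have G_sum: "(\<lambda>x. FF q (- \<bar>t\<bar>) (- \<bar>s\<bar>) (\<phi> x)) summable_on Sig"
    unfolding Sig_def
  proof (rule summable_on_SigmaI[where g = "\<lambda>k. DD q (- \<bar>t\<bar>) k * PP q (- \<bar>s\<bar>) k"])
    fix k :: nat assume k: "k \<in> {1..}"
    have "((\<lambda>(m, S). FF q (- \<bar>t\<bar>) (- \<bar>s\<bar>) (m, (k, S))) has_sum DD q (- \<bar>t\<bar>) k * PP q (- \<bar>s\<bar>) k) ((UNIV::nat set) \<times> Pow {1..<k})"
      using k by (intro inner_k[OF q _ tk']) auto
    then show "((\<lambda>y::nat \<times> nat set. FF q (- \<bar>t\<bar>) (- \<bar>s\<bar>) (\<phi> (k, y))) has_sum DD q (- \<bar>t\<bar>) k * PP q (- \<bar>s\<bar>) k) ((UNIV::nat set) \<times> Pow {1..<k})"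
      by (simp add: \<phi>_def case_prod_unfold)
  next
    show "(\<lambda>k. DD q (- \<bar>t\<bar>) k * PP q (- \<bar>s\<bar>) k) summable_on {1..}"
      using kseries[OF q a' b'] unfolding t' s' by (rule has_sum_imp_summable)
  next
    fix k :: nat and y :: "nat \<times> nat set" assume "k \<in> {1..}" "y \<in> (UNIV::nat set) \<times> Pow {1..<k}"
    then obtain m S where y: "y = (m, S)" and k: "1 \<le> k" and S: "S \<subseteq> {1..<k}" by auto
    show "0 \<le> FF q (- \<bar>t\<bar>) (- \<bar>s\<bar>) (\<phi> (k, y))"
      unfolding y \<phi>_def using FF_abs[OF q k S] by simp
  qed
  have G_sumJ: "FF q (- \<bar>t\<bar>) (- \<bar>s\<bar>) summable_on J"
    using G_sum summable_on_reindex_bij_betw[OF bij] by blast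
  have F_sum: "FF q t s summable_on J"
  proof -
    have "(\<lambda>x. norm (FF q t s x)) summable_on J"
    proof (rule summable_on_cong[THEN iffD1, OF _ G_sumJ])
      fix x assume "x \<in> J"
      then obtain m k S where x: "x = (m, (k, S))" and k: "1 \<le> k" and S: "S \<subseteq> {1..<k}"
        by (auto simp: J_def I_def)
      show "FF q (- \<bar>t\<bar>) (- \<bar>s\<bar>) x = norm (FF q t s x)" unfolding x using FF_abs[OF q k S] by simp
    qed
    then show ?thesis using summable_on_iff_abs_summable_on_real by blast
  qed
  have Fm: "(\<lambda>p. FF q t s (m, p)) summable_on I" for m
    using summable_on_SigmaD1[of "\<lambda>m p. FF q t s (m, p)" UNIV "\<lambda>_. I" m] F_sum
    by (simp add: J_def case_prod_eta)
  have inner_n: "infsum (\<lambda>p. FF q t s (m, p)) {p\<in>I. card (snd p) = n} =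
      (-1) ^ (m + n) * t ^ (m + 1) * s ^ (n + 1) * qzeta q ((m + 2) # replicate n 1)" for m n
  proof -
    have set: "{p\<in>I. card (snd p) = n} = {(k, S). 1 \<le> k \<and> S \<subseteq> {1..<k} \<and> card S = n}"
      by (auto simp: I_def)
    have "infsum (\<lambda>p. FF q t s (m, p)) {p\<in>I. card (snd p) = n} =
        infsum (\<lambda>p. (-1) ^ (m + n) * t ^ (m + 1) * s ^ (n + 1) *
          (case p of (k, S) \<Rightarrow> q ^ ((m + 1) * k) / qbr q (real k) ^ (m + 2) * (\<Prod>j\<in>S. 1 / qbr q (real j))))
          {(k, S). 1 \<le> k \<and> S \<subseteq> {1..<k} \<and> card S = n}"
      unfolding set by (rule infsum_cong) (auto simp: FF_def)
    also have "\<dots> = (-1) ^ (m + n) * t ^ (m + 1) * s ^ (n + 1) * qzeta q ((m + 2) # replicate n 1)"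
      by (subst infsum_cmult_right') (simp only: qzeta_reindex)
    finally show ?thesis .
  qed
  have row: "(\<Sum>n. (-1) ^ (m + n) * t ^ (m + 1) * s ^ (n + 1) * qzeta q ((m + 2) # replicate n 1)) =
      infsum (\<lambda>p. FF q t s (m, p)) I" for m
  proof -
    have "((\<lambda>n. infsum (\<lambda>p. FF q t s (m, p)) {p\<in>I. card (snd p) = n}) has_sum infsum (\<lambda>p. FF q t s (m, p)) I) UNIV"
      by (rule has_sum_partition[OF Fm])
    then have "(\<lambda>n. (-1) ^ (m + n) * t ^ (m + 1) * s ^ (n + 1) * qzeta q ((m + 2) # replicate n 1)) sums
        infsum (\<lambda>p. FF q t s (m, p)) I"
      unfolding inner_n by (rule has_sum_imp_sums)
    then show ?thesis by (rule sums_unique[symmetric])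
  qed
  have col: "(\<lambda>m. infsum (\<lambda>p. FF q t s (m, p)) I) sums infsum (FF q t s) J"
  proof -
    have S: "(\<lambda>(x, y). FF q t s (x, y)) summable_on Sigma UNIV (\<lambda>_. I)"
      using F_sum by (simp add: J_def case_prod_eta)
    have "infsum (\<lambda>m. infsum (\<lambda>p. FF q t s (m, p)) I) UNIV = infsum (\<lambda>(x, y). FF q t s (x, y)) (Sigma UNIV (\<lambda>_. I))"
      using infsum_Sigma'_banach[OF S] .
    moreover have "(\<lambda>m. infsum (\<lambda>p. FF q t s (m, p)) I) summable_on UNIV"
      using summable_on_Sigma_banach[OF S] .
    ultimately have "((\<lambda>m. infsum (\<lambda>p. FF q t s (m, p)) I) has_sum infsum (FF q t s) J) UNIV"
      by (metis J_def case_prod_eta has_sum_infsum)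
    then show ?thesis by (rule has_sum_imp_sums)
  qed
  have LHS: "(\<Sum>m. \<Sum>n. (-1) ^ (m + n) * t ^ (m + 1) * s ^ (n + 1) * qzeta q ((m + 2) # replicate n 1)) =
      infsum (FF q t s) J"
    unfolding row using col by (rule sums_unique[symmetric])
  have "(FF q t s has_sum infsum (FF q t s) J) J" using F_sum by (rule has_sum_infsum)
  then have hs: "((\<lambda>x. FF q t s (\<phi> x)) has_sum infsum (FF q t s) J) Sig"
    using has_sum_reindex_bij_betw[OF bij] by blast
  have "((\<lambda>k. DD q t k * PP q s k) has_sum infsum (FF q t s) J) {1..}"
  proof (rule has_sum_SigmaD[OF hs[unfolded Sig_def]])
    fix k :: nat assume k: "k \<in> {1..}"
    have "((\<lambda>(m, S). FF q t s (m, (k, S))) has_sum DD q t k * PP q s k) ((UNIV::nat set) \<times> Pow {1..<k})"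
      using k by (intro inner_k[OF q _ tk]) auto
    then show "((\<lambda>y::nat \<times> nat set. FF q t s (\<phi> (k, y))) has_sum DD q t k * PP q s k) ((UNIV::nat set) \<times> Pow {1..<k})"
      by (simp add: \<phi>_def case_prod_unfold)
  qed
  moreover have "((\<lambda>k. DD q t k * PP q s k) has_sum R) {1..}"
    unfolding t_def s_def R_def by (rule kseries[OF q a b])
  ultimately have "infsum (FF q t s) J = R" by (rule has_sum_unique)
  then show ?thesis using LHS by (simp add: t_def s_def R_def)
qed

lemma qpoch_qinf: "qpoch_inf q 1 (- c) = qinf q c"
  by (simp add: qpoch_inf_def qinf_def)

lemma powr_bounds:
  fixes q x :: real assumes q: "0 < q" "q < 1" and x: "\<bar>x\<bar> < 1"
  shows "q < q powr x" "q powr x * q < 1"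
proof -
  show "q < q powr x" using powr_less_mono'[OF q, of x 1] x q by simp
  have "q powr x * q = q powr (x + 1)" using q by (simp add: powr_add)
  also have "\<dots> < q powr 0" using x by (intro powr_less_mono'[OF q]) auto
  finally show "q powr x * q < 1" using q by simp
qed

lemma rhs_conv:
  fixes q x y :: real
  assumes q: "0 < q" "q < 1" and x: "\<bar>x\<bar> < 1" and y: "\<bar>y\<bar> < 1"
  shows "1 - qGamma q (1 + x) * qGamma q (1 + y) / qGamma q (1 + x + y) =
    1 - qinf q q * qinf q (q powr x * q powr y * q) / (qinf q (q powr x * q) * qinf q (q powr y * q))"
proof -
  define a where "a = q powr x"
  define b where "b = q powr y"
  define e where "e = 1 - q"
  have e0: "e > 0" using q by (simp add: e_def)
  have p1: "q powr (1 + x) = a * q" "q powr (1 + y) = b * q" "q powr (1 + x + y) = a * b * q"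
    using q by (simp_all add: a_def b_def powr_add)
  have G: "qGamma q (1 + x) = qinf q q * e powr (- x) / qinf q (a * q)"
    "qGamma q (1 + y) = qinf q q * e powr (- y) / qinf q (b * q)"
    "qGamma q (1 + x + y) = qinf q q * e powr (- x - y) / qinf q (a * b * q)"
    unfolding qGamma_def p1 qpoch_qinf e_def by (simp_all add: algebra_simps)
  have nz: "qinf q (c * q) \<noteq> 0" if "0 < c" "c * q < 1" for c
  proof (rule qinf_nonzero[OF q])
    fix k :: nat
    have "q ^ k \<le> 1" using q by (simp add: power_le_one)
    then have "c * q * q ^ k \<le> c * q * 1" using that q by (intro mult_left_mono) auto
    then have "c * q * q ^ k \<le> c * q" by (simp only: mult_1_right)
    then show "c * q * q ^ k \<noteq> 1" using that(2) by linarith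
  qed
  have A: "qinf q (a * q) \<noteq> 0" using nz[of a] powr_bounds[OF q x] q by (simp add: a_def)
  have B: "qinf q (b * q) \<noteq> 0" using nz[of b] powr_bounds[OF q y] q by (simp add: b_def)
  have Q: "qinf q q \<noteq> 0" using nz[of 1] q by simp
  have E: "e powr (- x - y) = e powr (- x) * e powr (- y)" by (simp add: powr_add[symmetric])
  have Ep: "e powr (- x) > 0" "e powr (- y) > 0" using e0 by auto
  show ?thesis
  proof (cases "qinf q (a * b * q) = 0")
    case True then show ?thesis unfolding G by (simp add: a_def b_def)
  next
    case False
    then show ?thesis unfolding G E using A B Q Ep by (simp add: a_def[symmetric] b_def[symmetric] field_simps)
  qed
qed

theorem theorem7p4:
  fixes q x y :: real
  assumes "0 < q" and "q < 1" and "\<bar>x\<bar> < 1" and "\<bar>y\<bar> < 1"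
  shows "(\<Sum>m. \<Sum>n. (-1) ^ (m + n) * (qbr q x) ^ (m + 1) * (qbr q y) ^ (n + 1)
            * qzeta q ((m + 2) # replicate n 1))
         = 1 - qGamma q (1 + x) * qGamma q (1 + y) / qGamma q (1 + x + y)"
proof -
  note q = assms(1,2)
  define a where "a = q powr x"
  define b where "b = q powr y"
  have a: "q < a" "a * q < 1" using powr_bounds[OF q assms(3)] by (auto simp: a_def)
  have b: "q < b" "b * q < 1" using powr_bounds[OF q assms(4)] by (auto simp: b_def)
  have tx: "qbr q x = (1 - a) / (1 - q)" by (simp add: qbr_def a_def)
  have ty: "qbr q y = (1 - b) / (1 - q)" by (simp add: qbr_def b_def)
  have R: "1 - qGamma q (1 + x) * qGamma q (1 + y) / qGamma q (1 + x + y) =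
      1 - qinf q q * qinf q (a * b * q) / (qinf q (a * q) * qinf q (b * q))"
    unfolding a_def b_def by (rule rhs_conv[OF q assms(3,4)])
  have nz: "qinf q (c * q) \<noteq> 0" if "0 < c" "c * q < 1" for c
  proof (rule qinf_nonzero[OF q])
    fix k :: nat
    have "q ^ k \<le> 1" using q by (simp add: power_le_one)
    then have "c * q * q ^ k \<le> c * q * 1" using that q by (intro mult_left_mono) auto
    then have "c * q * q ^ k \<le> c * q" by (simp only: mult_1_right)
    then show "c * q * q ^ k \<noteq> 1" using that(2) by linarith
  qed
  show ?thesis
  proof (cases "a = 1 \<or> b = 1")
    case True
    then have "qbr q x = 0 \<or> qbr q y = 0" by (auto simp: tx ty)
    then have L: "(\<Sum>m. \<Sum>n. (-1) ^ (m + n) * (qbr q x) ^ (m + 1) * (qbr q y) ^ (n + 1)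
            * qzeta q ((m + 2) # replicate n 1)) = 0" by auto
    have H: "qinf q q * qinf q (a * b * q) / (qinf q (a * q) * qinf q (b * q)) = 1"
      using True nz[of a] nz[of b] nz[of 1] a b q by auto
    show ?thesis unfolding L R H by simp
  next
    case False
    then show ?thesis unfolding R tx ty using main_series[OF q a _ b] by auto
  qed
qed

end
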